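(* Let $N\ge1$, $\mathbf{S}=(\mathsf{SNR}_{s,r},\mathsf{SNR}_{s,1},\dots,\mathsf{SNR}_{s,N},\mathsf{SNR}_{r,1},\dots,\mathsf{SNR}_{r,N})\in[0,\infty)^{2N+1}$, $\rho\in[0,1]$, $\mathsf{C}(x)=\tfrac12\log(1+x)$, and for $j=1,\dots,N$ $$f_j(\rho,\mathbf{S})=\mathsf{SNR}_{s,j}+\mathsf{SNR}_{r,j}+2\rho\sqrt{\mathsf{SNR}_{s,j}\mathsf{SNR}_{r,j}},\qquad g^*_j(\rho,\mathbf{S})=(1-\rho^2)\,\mathsf{SNR}_{s,r},$$ $$R_{DF}(\rho,\mathbf{S})=\min_{1\le j\le N}\min\big(\mathsf{C}(f_j(\rho,\mathbf{S})),\mathsf{C}(g^*_j(\rho,\mathbf{S}))\big).$$ Then $R_{DF}(\rho,\mathbf{S})$ is concave in $\rho\in[0,1]$ for fixed $\mathbf{S}$, concave in $\mathbf{S}\in[0,\infty)^{2N+1}$ for fixed $\rho$, and the map $(t,\mathbf{S})\mapsto R_{DF}(\sqrt t,\mathbf{S})$ is quasi-concave on $[0,1]\times[0,\infty)^{2N+1}$ (i.e., quasi-concave in $(\rho^2,\mathbf{S})$).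
   Context: $R_{DF}$ is the decode-forward rate expression for a real AWGN multicast relay channel with source $s$, relay $r$, destinations $1,\dots,N$, link SNRs $\mathsf{SNR}_{u,v}\ge0$ and source–relay input correlation coefficient $\rho$. A function $F$ on a convex set is quasi-concave if $F(\lambda x_1+(1-\lambda)x_2)\ge\min(F(x_1),F(x_2))$ for all $x_1,x_2$ and $\lambda\in[0,1]$. *)

theory Defs
  imports "HOL-Analysis.Analysis"
begin

definition Cap :: "real \<Rightarrow> real" where
  "Cap x = 1/2 * ln (1 + x)"

text \<open>A channel-SNR vector S = (SNR_sr, SNR_s1..SNR_sN, SNR_r1..SNR_rN) is represented by
  sr :: real, s :: nat \<Rightarrow> real, r :: nat \<Rightarrow> real, only indices 1..N being relevant.\<close>
definition f_j :: "nat \<Rightarrow> real \<Rightarrow> (nat \<Rightarrow> real) \<Rightarrow> (nat \<Rightarrow> real) \<Rightarrow> real" where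
  "f_j j \<rho> s r = s j + r j + 2 * \<rho> * sqrt (s j * r j)"

definition g_star :: "real \<Rightarrow> real \<Rightarrow> real" where
  "g_star \<rho> sr = (1 - \<rho>\<^sup>2) * sr"

definition R_DF :: "nat \<Rightarrow> real \<Rightarrow> real \<Rightarrow> (nat \<Rightarrow> real) \<Rightarrow> (nat \<Rightarrow> real) \<Rightarrow> real" where
  "R_DF N \<rho> sr s r = Min ((\<lambda>j. min (Cap (f_j j \<rho> s r)) (Cap (g_star \<rho> sr))) ` {1..N})"

definition S_dom :: "nat \<Rightarrow> real \<Rightarrow> (nat \<Rightarrow> real) \<Rightarrow> (nat \<Rightarrow> real) \<Rightarrow> bool" where
  "S_dom N sr s r \<longleftrightarrow> sr \<ge> 0 \<and> (\<forall>j\<in>{1..N}. s j \<ge> 0 \<and> r j \<ge> 0)"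

end

theory Submission
  imports Defs
begin


definition hh :: "real \<Rightarrow> real \<Rightarrow> real \<Rightarrow> real" where
  "hh t s r = s + r + 2 * sqrt t * sqrt (s * r)"

lemma Cap_mono: "0 \<le> x \<Longrightarrow> x \<le> y \<Longrightarrow> Cap x \<le> Cap y"
  unfolding Cap_def by simp

lemma Cap_conc:
  assumes "0 \<le> x" "0 \<le> y" "0 \<le> a" "a \<le> 1"
  shows "a * Cap x + (1-a) * Cap y \<le> Cap (a * x + (1-a) * y)"
proof -
  have "(1 - (1-a)) * ln (1+x) + (1-a) * ln (1+y) \<le> ln ((1 - (1-a)) * (1+x) + (1-a) * (1+y))"
    using concave_onD[OF ln_concave, of "1-a" "1+x" "1+y"] assms by simp
  moreover have "(1 - (1-a)) * (1+x) + (1-a) * (1+y) = 1 + (a * x + (1-a) * y)" by algebra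
  ultimately have "a * ln (1+x) + (1-a) * ln (1+y) \<le> ln (1 + (a * x + (1-a) * y))" by simp
  moreover have "a * Cap x + (1-a) * Cap y = 1/2 * (a * ln (1+x) + (1-a) * ln (1+y))"
    unfolding Cap_def by (simp add: field_simps)
  ultimately show ?thesis unfolding Cap_def by linarith
qed

lemma Cap_quasi:
  assumes "0 \<le> x" "0 \<le> y" "min x y \<le> z"
  shows "min (Cap x) (Cap y) \<le> Cap z"
proof (cases "x \<le> y")
  case True
  then have "Cap x \<le> Cap z" using assms Cap_mono by simp
  then show ?thesis by (simp add: min_le_iff_disj)
next
  case False
  then have "Cap y \<le> Cap z" using assms Cap_mono by simp
  then show ?thesis by (simp add: min_le_iff_disj)
qed

lemma sqrt_geo_conc:
  assumes "0 \<le> s1" "0 \<le> r1" "0 \<le> s2" "0 \<le> r2" "0 \<le> a" "a \<le> 1"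
  shows "a * sqrt(s1 * r1) + (1-a) * sqrt(s2 * r2) \<le> sqrt((a * s1+(1-a) * s2) * (a * r1+(1-a) * r2))"
proof -
  define u1 where "u1 = sqrt s1"
  define v1 where "v1 = sqrt r1"
  define u2 where "u2 = sqrt s2"
  define v2 where "v2 = sqrt r2"
  have e: "s1 = u1^2" "r1 = v1^2" "s2 = u2^2" "r2 = v2^2"
    using assms by (auto simp: u1_def v1_def u2_def v2_def)
  have p: "sqrt (s1 * r1) = u1 * v1" "sqrt (s2 * r2) = u2 * v2"
    by (auto simp: u1_def v1_def u2_def v2_def real_sqrt_mult)
  have "(a * (u1 * v1) + (1-a) * (u2 * v2))^2 \<le> (a * s1 + (1-a) * s2) * (a * r1 + (1-a) * r2)"
    unfolding e
  proof -
    have "(a * u1^2+(1-a) * u2^2) * (a * v1^2+(1-a) * v2^2) - (a * (u1 * v1) + (1-a) * (u2 * v2))^2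
        = a * (1-a) * (u1 * v2 - u2 * v1)^2" by (simp add: power2_eq_square algebra_simps)
    moreover have "0 \<le> a * (1-a) * (u1 * v2 - u2 * v1)^2" using assms by simp
    ultimately show "(a * (u1 * v1) + (1-a) * (u2 * v2))^2 \<le> (a * u1^2+(1-a) * u2^2) * (a * v1^2+(1-a) * v2^2)" by linarith
  qed
  then show ?thesis unfolding p by (rule real_le_rsqrt)
qed

lemma amgm3:
  fixes w q v :: real
  assumes "0 \<le> w" "0 \<le> q" "0 \<le> v"
  shows "q * v * (3 * w - q - v) \<le> w^3"
proof -
  define m where "m = sqrt (q * v)"
  have m0: "0 \<le> m" and mm: "m^2 = q * v" using assms by (auto simp: m_def)
  have "0 \<le> (w-m)^2 * (w+2 * m)" using assms m0 by simp
  hence 1: "3 * m^2 * w - 2 * m^3 \<le> w^3" by (simp add: power2_eq_square power3_eq_cube algebra_simps)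
  have "(q+v)^2 - (2 * m)^2 = (q-v)^2" using mm by (simp add: power2_eq_square algebra_simps)
  hence "(2 * m)^2 \<le> (q+v)^2" by (metis diff_ge_0_iff_ge zero_le_power2)
  moreover have qv0: "0 \<le> q+v" using assms by simp
  ultimately have 2: "2 * m \<le> q + v" by (rule power2_le_imp_le)
  have "2 * m^3 = (2 * m) * m^2" by (simp add: power2_eq_square power3_eq_cube)
  also have "\<dots> \<le> (q+v) * m^2" using 2 by (intro mult_right_mono) auto
  finally have "2 * m^3 \<le> q * v * (q+v)" using mm by (simp add: algebra_simps)
  thus ?thesis using 1 mm by (simp add: algebra_simps)
qed

lemma tangent:
  fixes w s r T c k l :: real
  assumes "0 \<le> w" "0 \<le> s" "0 \<le> r" "0 \<le> T" "w^2 \<le> T * (s * r)" "w + s + r = c" "0 \<le> k" "0 \<le> l"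
  shows "2 * k * w - k^2 * s + 2 * l * w - l^2 * r + 3 * k * l * w - k^2 * l * s - k * l^2 * r \<le> c * T"
proof (cases "s * r = 0")
  case True
  then have "T * (s * r) = 0" by simp
  then have "w^2 \<le> 0" using assms(5) by linarith
  then have "w = 0" by simp
  moreover have "0 \<le> c * T" using assms by simp
  moreover have "0 \<le> k^2 * s + l^2 * r + k^2 * l * s + k * l^2 * r" using assms by simp
  ultimately show ?thesis by simp
next
  case False
  then have sp: "0 < s" "0 < r" using assms by (auto simp: less_le)
  have c0: "0 \<le> c" using assms by simp
  have "w^2 / (s * r) \<le> T" using assms(5) sp by (simp add: divide_le_eq mult.commute)
  hence A: "c * (w^2 / (s * r)) \<le> c * T" using c0 by (rule mult_left_mono)
  have B: "c * (w^2 / (s * r)) = w^2 / s + w^2 / r + w^3 / (s * r)"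
    using sp unfolding assms(6)[symmetric] by (simp add: field_simps power2_eq_square power3_eq_cube)
  have C1: "2 * k * w - k^2 * s \<le> w^2 / s"
  proof -
    have "0 \<le> (w - k * s)^2" by simp
    hence "2 * k * w * s - k^2 * s * s \<le> w^2" by (simp add: power2_eq_square algebra_simps)
    thus ?thesis using sp by (simp add: le_divide_eq algebra_simps)
  qed
  have C2: "2 * l * w - l^2 * r \<le> w^2 / r"
  proof -
    have "0 \<le> (w - l * r)^2" by simp
    hence "2 * l * w * r - l^2 * r * r \<le> w^2" by (simp add: power2_eq_square algebra_simps)
    thus ?thesis using sp by (simp add: le_divide_eq algebra_simps)
  qed
  have C3: "3 * k * l * w - k^2 * l * s - k * l^2 * r \<le> w^3 / (s * r)"
  proof -
    have "(k * s) * (l * r) * (3 * w - k * s - l * r) \<le> w^3"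
      using amgm3[of w "k * s" "l * r"] assms by simp
    hence "(3 * k * l * w - k^2 * l * s - k * l^2 * r) * (s * r) \<le> w^3"
      by (simp add: power2_eq_square algebra_simps)
    thus ?thesis using sp by (simp add: le_divide_eq)
  qed
  show ?thesis using A B C1 C2 C3 by linarith
qed

lemma hh_mono:
  assumes "0 \<le> t" "0 \<le> s" "0 \<le> r" "s \<le> s'" "r \<le> r'"
  shows "hh t s r \<le> hh t s' r'"
proof -
  have "sqrt (s * r) \<le> sqrt (s' * r')" using assms by (simp add: mult_mono)
  hence "2 * sqrt t * sqrt (s * r) \<le> 2 * sqrt t * sqrt (s' * r')" using assms by (simp add: mult_left_mono)
  thus ?thesis unfolding hh_def using assms by linarith
qed

lemma hh_nonneg: "0 \<le> t \<Longrightarrow> 0 \<le> s \<Longrightarrow> 0 \<le> r \<Longrightarrow> 0 \<le> hh t s r"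
  unfolding hh_def by simp

lemma hh_scale: "0 \<le> lam \<Longrightarrow> hh t (lam * s) (lam * r) = lam * hh t s r"
proof -
  assume "0 \<le> lam"
  hence "sqrt (lam * s * (lam * r)) = lam * sqrt (s * r)"
    by (simp add: real_sqrt_mult power2_eq_square[symmetric] mult.assoc mult.left_commute)
  thus ?thesis unfolding hh_def by (simp add: algebra_simps)
qed

lemma hh_w:
  assumes "0 \<le> t" "0 \<le> s" "0 \<le> r" "hh t s r = c"
  shows "0 \<le> c - s - r" "(c - s - r)^2 = 4 * t * (s * r)"
proof -
  have e: "c - s - r = 2 * sqrt t * sqrt (s * r)" using assms(4) unfolding hh_def by linarith
  show "0 \<le> c - s - r" unfolding e using assms by simp
  show "(c - s - r)^2 = 4 * t * (s * r)" unfolding e using assms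
    by (simp add: power_mult_distrib)
qed

lemma coreA:
  fixes t1 s1 r1 t2 s2 r2 a c :: real
  assumes t1: "0 \<le> t1" and s1: "0 \<le> s1" and r1: "0 \<le> r1"
    and t2: "0 \<le> t2" and s2: "0 \<le> s2" and r2: "0 \<le> r2"
    and a0: "0 \<le> a" and a1: "a \<le> 1" and c0: "0 < c"
    and h1: "hh t1 s1 r1 = c" and h2: "hh t2 s2 r2 = c"
  shows "c \<le> hh (a * t1 + (1-a) * t2) (a * s1 + (1-a) * s2) (a * r1 + (1-a) * r2)"
proof -
  define w1 where "w1 = c - s1 - r1"
  define w2 where "w2 = c - s2 - r2"
  have w1: "0 \<le> w1" "w1^2 = 4 * t1 * (s1 * r1)" using hh_w[OF t1 s1 r1 h1] by (auto simp: w1_def)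
  have w2: "0 \<le> w2" "w2^2 = 4 * t2 * (s2 * r2)" using hh_w[OF t2 s2 r2 h2] by (auto simp: w2_def)
  define tm where "tm = a * t1 + (1-a) * t2"
  define S where "S = a * s1 + (1-a) * s2"
  define R where "R = a * r1 + (1-a) * r2"
  define W where "W = a * w1 + (1-a) * w2"
  have b0: "0 \<le> 1 - a" using a1 by simp
  have tm0: "0 \<le> tm" unfolding tm_def using t1 t2 a0 b0 by simp
  have S0: "0 \<le> S" unfolding S_def using s1 s2 a0 b0 by simp
  have R0: "0 \<le> R" unfolding R_def using r1 r2 a0 b0 by simp
  have We: "W = c - S - R" unfolding W_def S_def R_def w1_def w2_def by (simp add: algebra_simps)
  have hhe: "hh tm S R = S + R + 2 * sqrt tm * sqrt (S * R)" unfolding hh_def ..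
  show ?thesis
  proof (cases "W \<le> 0")
    case True
    have "0 \<le> 2 * sqrt tm * sqrt (S * R)" using tm0 S0 R0 by simp
    then show ?thesis using True We hhe unfolding tm_def S_def R_def by linarith
  next
    case False
    hence Wp: "0 < W" by simp
    have aw1: "a * w1 = 0" if "a * s1 = 0 \<or> a * r1 = 0"
    proof (cases "a = 0")
      case False
      then have "s1 = 0 \<or> r1 = 0" using that by simp
      then have "w1^2 = 0" using w1 by auto
      then show ?thesis by simp
    qed simp
    have bw2: "(1-a) * w2 = 0" if "(1-a) * s2 = 0 \<or> (1-a) * r2 = 0"
    proof (cases "1 - a = 0")
      case False
      then have "s2 = 0 \<or> r2 = 0" using that by simp
      then have "w2^2 = 0" using w2 by auto
      then show ?thesis by simp
    qed simp
    have Sp: "0 < S"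
    proof (rule ccontr)
      assume "\<not> 0 < S"
      hence "S = 0" using S0 by simp
      hence z: "a * s1 = 0" "(1-a) * s2 = 0" unfolding S_def using a0 b0 s1 s2
        by (smt (verit) mult_nonneg_nonneg)+
      have "a * w1 = 0" using aw1 z by blast
      moreover have "(1-a) * w2 = 0" using bw2 z by blast
      ultimately have "W = 0" unfolding W_def by linarith
      thus False using Wp by simp
    qed
    have Rp: "0 < R"
    proof (rule ccontr)
      assume "\<not> 0 < R"
      hence "R = 0" using R0 by simp
      hence z: "a * r1 = 0" "(1-a) * r2 = 0" unfolding R_def using a0 b0 r1 r2
        by (smt (verit) mult_nonneg_nonneg)+
      have "a * w1 = 0" using aw1 z by blast
      moreover have "(1-a) * w2 = 0" using bw2 z by blast
      ultimately have "W = 0" unfolding W_def by linarith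
      thus False using Wp by simp
    qed
    define k where "k = W / S"
    define l where "l = W / R"
    have k0: "0 \<le> k" and l0: "0 \<le> l" using Wp Sp Rp by (auto simp: k_def l_def)
    have L1: "2 * k * w1 - k^2 * s1 + 2 * l * w1 - l^2 * r1 + 3 * k * l * w1 - k^2 * l * s1 - k * l^2 * r1 \<le> c * (4 * t1)"
      by (rule tangent) (use w1 t1 s1 r1 k0 l0 in \<open>auto simp: w1_def\<close>)
    have L2: "2 * k * w2 - k^2 * s2 + 2 * l * w2 - l^2 * r2 + 3 * k * l * w2 - k^2 * l * s2 - k * l^2 * r2 \<le> c * (4 * t2)"
      by (rule tangent) (use w2 t2 s2 r2 k0 l0 in \<open>auto simp: w2_def\<close>)
    have "a * (2 * k * w1 - k^2 * s1 + 2 * l * w1 - l^2 * r1 + 3 * k * l * w1 - k^2 * l * s1 - k * l^2 * r1)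
        + (1-a) * (2 * k * w2 - k^2 * s2 + 2 * l * w2 - l^2 * r2 + 3 * k * l * w2 - k^2 * l * s2 - k * l^2 * r2)
        \<le> a * (c * (4 * t1)) + (1-a) * (c * (4 * t2))"
      using mult_left_mono[OF L1 a0] mult_left_mono[OF L2 b0] by linarith
    moreover have "a * (2 * k * w1 - k^2 * s1 + 2 * l * w1 - l^2 * r1 + 3 * k * l * w1 - k^2 * l * s1 - k * l^2 * r1)
        + (1-a) * (2 * k * w2 - k^2 * s2 + 2 * l * w2 - l^2 * r2 + 3 * k * l * w2 - k^2 * l * s2 - k * l^2 * r2)
        = 2 * k * W - k^2 * S + 2 * l * W - l^2 * R + 3 * k * l * W - k^2 * l * S - k * l^2 * R"
      unfolding W_def S_def R_def by (simp add: algebra_simps)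
    moreover have "2 * k * W - k^2 * S + 2 * l * W - l^2 * R + 3 * k * l * W - k^2 * l * S - k * l^2 * R
        = W^2 * c / (S * R)"
    proof -
      have ce: "c = W + S + R" using We by simp
      show ?thesis unfolding k_def l_def ce using Sp Rp
        by (simp add: field_simps power2_eq_square power3_eq_cube)
    qed
    moreover have "a * (c * (4 * t1)) + (1-a) * (c * (4 * t2)) = c * (4 * tm)"
      unfolding tm_def by (simp add: algebra_simps)
    ultimately have "W^2 * c / (S * R) \<le> c * (4 * tm)" by simp
    hence "W^2 * c \<le> c * (4 * tm) * (S * R)" using Sp Rp by (simp add: divide_le_eq)
    hence "c * W^2 \<le> c * (4 * tm * (S * R))" by (simp add: algebra_simps)
    hence "W^2 \<le> 4 * tm * (S * R)" using c0 by simp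
    hence "W \<le> sqrt (4 * tm * (S * R))" by (rule real_le_rsqrt)
    also have "\<dots> = 2 * sqrt tm * sqrt (S * R)" by (simp add: real_sqrt_mult)
    finally show ?thesis using We hhe unfolding tm_def S_def R_def by linarith
  qed
qed

lemma hh_quasi:
  fixes t1 s1 r1 t2 s2 r2 a :: real
  assumes t1: "0 \<le> t1" and s1: "0 \<le> s1" and r1: "0 \<le> r1"
    and t2: "0 \<le> t2" and s2: "0 \<le> s2" and r2: "0 \<le> r2"
    and a0: "0 \<le> a" and a1: "a \<le> 1"
  shows "min (hh t1 s1 r1) (hh t2 s2 r2) \<le> hh (a * t1 + (1-a) * t2) (a * s1 + (1-a) * s2) (a * r1 + (1-a) * r2)"
proof -
  define c where "c = min (hh t1 s1 r1) (hh t2 s2 r2)"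
  have b0: "0 \<le> 1 - a" using a1 by simp
  have tm0: "0 \<le> a * t1 + (1-a) * t2" using t1 t2 a0 b0 by simp
  have sm0: "0 \<le> a * s1 + (1-a) * s2" using s1 s2 a0 b0 by simp
  have rm0: "0 \<le> a * r1 + (1-a) * r2" using r1 r2 a0 b0 by simp
  show ?thesis
  proof (cases "c \<le> 0")
    case True
    then show ?thesis using hh_nonneg[OF tm0 sm0 rm0] unfolding c_def by linarith
  next
    case False
    hence cp: "0 < c" by simp
    define h1 where "h1 = hh t1 s1 r1"
    define h2 where "h2 = hh t2 s2 r2"
    have ch1: "c \<le> h1" and ch2: "c \<le> h2" unfolding c_def h1_def h2_def by auto
    define l1 where "l1 = c / h1"
    define l2 where "l2 = c / h2"
    have l10: "0 \<le> l1" "l1 \<le> 1" using cp ch1 by (auto simp: l1_def)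
    have l20: "0 \<le> l2" "l2 \<le> 1" using cp ch2 by (auto simp: l2_def)
    have e1: "hh t1 (l1 * s1) (l1 * r1) = c"
      using hh_scale[OF l10(1)] cp ch1 unfolding h1_def l1_def by simp
    have e2: "hh t2 (l2 * s2) (l2 * r2) = c"
      using hh_scale[OF l20(1)] cp ch2 unfolding h2_def l2_def by simp
    have "c \<le> hh (a * t1 + (1-a) * t2) (a * (l1 * s1) + (1-a) * (l2 * s2)) (a * (l1 * r1) + (1-a) * (l2 * r2))"
      by (rule coreA) (use t1 s1 r1 t2 s2 r2 a0 a1 cp e1 e2 l10 l20 in auto)
    also have "\<dots> \<le> hh (a * t1 + (1-a) * t2) (a * s1 + (1-a) * s2) (a * r1 + (1-a) * r2)"
    proof (rule hh_mono[OF tm0])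
      show "0 \<le> a * (l1 * s1) + (1-a) * (l2 * s2)" using l10 l20 s1 s2 a0 b0 by simp
      show "0 \<le> a * (l1 * r1) + (1-a) * (l2 * r2)" using l10 l20 r1 r2 a0 b0 by simp
      have "l1 * s1 \<le> s1" "l2 * s2 \<le> s2" "l1 * r1 \<le> r1" "l2 * r2 \<le> r2"
        using l10 l20 s1 s2 r1 r2 by (auto simp: mult_left_le_one_le)
      then show "a * (l1 * s1) + (1-a) * (l2 * s2) \<le> a * s1 + (1-a) * s2"
        and "a * (l1 * r1) + (1-a) * (l2 * r2) \<le> a * r1 + (1-a) * r2"
        using a0 b0 by (auto intro!: add_mono mult_left_mono)
    qed
    finally show ?thesis unfolding c_def .
  qed
qed

lemma prod_quasi:
  fixes u1 v1 u2 v2 a :: real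
  assumes "0 \<le> u1" "0 \<le> v1" "0 \<le> u2" "0 \<le> v2" "0 \<le> a" "a \<le> 1"
  shows "min (u1 * v1) (u2 * v2) \<le> (a * u1 + (1-a) * u2) * (a * v1 + (1-a) * v2)"
proof -
  define m where "m = min (u1 * v1) (u2 * v2)"
  have m0: "0 \<le> m" using assms by (simp add: m_def)
  have m1: "m \<le> u1 * v1" and m2: "m \<le> u2 * v2" by (auto simp: m_def)
  have "m * m \<le> (u1 * v2) * (u2 * v1)"
    using mult_mono[OF m1 m2] m0 assms by (simp add: algebra_simps)
  hence "(2 * m)^2 \<le> (u1 * v2 + u2 * v1)^2"
  proof -
    assume h: "m * m \<le> (u1 * v2) * (u2 * v1)"
    have "(u1 * v2 + u2 * v1)^2 - 4 * ((u1 * v2) * (u2 * v1)) = (u1 * v2 - u2 * v1)^2"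
      by (simp add: power2_eq_square algebra_simps)
    hence "4 * ((u1 * v2) * (u2 * v1)) \<le> (u1 * v2 + u2 * v1)^2" by (metis diff_ge_0_iff_ge zero_le_power2)
    thus ?thesis using h by (simp add: power2_eq_square)
  qed
  moreover have "0 \<le> u1 * v2 + u2 * v1" using assms by simp
  ultimately have cr: "2 * m \<le> u1 * v2 + u2 * v1" by (rule power2_le_imp_le)
  have "(a * u1 + (1-a) * u2) * (a * v1 + (1-a) * v2)
      = a^2 * (u1 * v1) + (1-a)^2 * (u2 * v2) + a * (1-a) * (u1 * v2 + u2 * v1)"
    by (simp add: power2_eq_square algebra_simps)
  moreover have "a^2 * m \<le> a^2 * (u1 * v1)" using m1 by (simp add: mult_left_mono)
  moreover have "(1-a)^2 * m \<le> (1-a)^2 * (u2 * v2)" using m2 by (simp add: mult_left_mono)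
  moreover have "a * (1-a) * (2 * m) \<le> a * (1-a) * (u1 * v2 + u2 * v1)"
    using cr assms by (intro mult_left_mono) auto
  moreover have "a^2 * m + (1-a)^2 * m + a * (1-a) * (2 * m) = m"
    by (simp add: power2_eq_square algebra_simps)
  ultimately show ?thesis unfolding m_def[symmetric] by linarith
qed

lemma Min_conc:
  fixes A B H :: "nat \<Rightarrow> real"
  assumes "finite J" "J \<noteq> {}" "0 \<le> a" "a \<le> 1" "\<And>j. j \<in> J \<Longrightarrow> a * A j + (1-a) * B j \<le> H j"
  shows "a * Min (A ` J) + (1-a) * Min (B ` J) \<le> Min (H ` J)"
proof -
  have "Min (H ` J) \<in> H ` J" using assms by (intro Min_in) auto
  then obtain j where j: "j \<in> J" "Min (H ` J) = H j" by auto
  have "Min (A ` J) \<le> A j" "Min (B ` J) \<le> B j" using assms j by auto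
  hence "a * Min (A ` J) \<le> a * A j" "(1-a) * Min (B ` J) \<le> (1-a) * B j"
    using assms by (auto intro: mult_left_mono)
  thus ?thesis using assms(5)[OF j(1)] j(2) by linarith
qed

lemma Min_quasi:
  fixes A B H :: "nat \<Rightarrow> real"
  assumes "finite J" "J \<noteq> {}" "\<And>j. j \<in> J \<Longrightarrow> min (A j) (B j) \<le> H j"
  shows "min (Min (A ` J)) (Min (B ` J)) \<le> Min (H ` J)"
proof -
  have "Min (H ` J) \<in> H ` J" using assms by (intro Min_in) auto
  then obtain j where j: "j \<in> J" "Min (H ` J) = H j" by auto
  have "Min (A ` J) \<le> A j" "Min (B ` J) \<le> B j" using assms j by auto
  moreover have "A j \<le> H j \<or> B j \<le> H j" using assms(3)[OF j(1)] by (simp add: min_le_iff_disj)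
  ultimately show ?thesis unfolding j(2) min_le_iff_disj by (meson order_trans)
qed

lemma min_conc:
  fixes a x1 x2 y1 y2 X Y :: real
  assumes "0 \<le> a" "a \<le> 1" "a * x1 + (1-a) * x2 \<le> X" "a * y1 + (1-a) * y2 \<le> Y"
  shows "a * min x1 y1 + (1-a) * min x2 y2 \<le> min X Y"
proof -
  have "a * min x1 y1 \<le> a * x1" "a * min x1 y1 \<le> a * y1"
    "(1-a) * min x2 y2 \<le> (1-a) * x2" "(1-a) * min x2 y2 \<le> (1-a) * y2"
    using assms by (auto intro: mult_left_mono)
  thus ?thesis using assms by linarith
qed

lemma min_quasi2:
  fixes x1 x2 y1 y2 X Y :: real
  assumes "min x1 x2 \<le> X" "min y1 y2 \<le> Y"
  shows "min (min x1 y1) (min x2 y2) \<le> min X Y"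
  using assms unfolding min_le_iff_disj min.bounded_iff by auto

lemma part1_j:
  fixes sr \<rho>1 \<rho>2 a :: real
  assumes sr: "0 \<le> sr" and sj: "0 \<le> s j" and rj: "0 \<le> r j"
    and p1: "0 \<le> \<rho>1" "\<rho>1 \<le> 1" and p2: "0 \<le> \<rho>2" "\<rho>2 \<le> 1" and a0: "0 \<le> a" and a1: "a \<le> 1"
  shows "a * min (Cap (f_j j \<rho>1 s r)) (Cap (g_star \<rho>1 sr)) + (1-a) * min (Cap (f_j j \<rho>2 s r)) (Cap (g_star \<rho>2 sr))
    \<le> min (Cap (f_j j (a * \<rho>1 + (1-a) * \<rho>2) s r)) (Cap (g_star (a * \<rho>1 + (1-a) * \<rho>2) sr))"
proof (rule min_conc[OF a0 a1])
  have b0: "0 \<le> 1 - a" using a1 by simp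
  have f0: "0 \<le> f_j j \<rho> s r" if "0 \<le> \<rho>" for \<rho> unfolding f_j_def using that sj rj by simp
  have "f_j j (a * \<rho>1 + (1-a) * \<rho>2) s r = a * f_j j \<rho>1 s r + (1-a) * f_j j \<rho>2 s r"
    unfolding f_j_def by (simp add: algebra_simps)
  then show "a * Cap (f_j j \<rho>1 s r) + (1-a) * Cap (f_j j \<rho>2 s r) \<le> Cap (f_j j (a * \<rho>1 + (1-a) * \<rho>2) s r)"
    using Cap_conc[OF f0 f0 a0 a1] p1 p2 by simp
  have g0: "0 \<le> g_star \<rho> sr" if "0 \<le> \<rho>" "\<rho> \<le> 1" for \<rho>
  proof -
    have "\<rho>^2 \<le> 1" using that by (simp add: power_le_one)
    thus ?thesis unfolding g_star_def using sr by simp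
  qed
  have "(a * \<rho>1 + (1-a) * \<rho>2)^2 \<le> a * \<rho>1^2 + (1-a) * \<rho>2^2"
  proof -
    have "a * \<rho>1^2 + (1-a) * \<rho>2^2 - (a * \<rho>1 + (1-a) * \<rho>2)^2 = a * (1-a) * (\<rho>1 - \<rho>2)^2"
      by (simp add: power2_eq_square algebra_simps)
    moreover have "0 \<le> a * (1-a) * (\<rho>1 - \<rho>2)^2" using a0 b0 by simp
    ultimately show ?thesis by linarith
  qed
  hence "a * g_star \<rho>1 sr + (1-a) * g_star \<rho>2 sr \<le> g_star (a * \<rho>1 + (1-a) * \<rho>2) sr"
  proof -
    assume h: "(a * \<rho>1 + (1-a) * \<rho>2)^2 \<le> a * \<rho>1^2 + (1-a) * \<rho>2^2"
    have "a * g_star \<rho>1 sr + (1-a) * g_star \<rho>2 sr = (1 - (a * \<rho>1^2 + (1-a) * \<rho>2^2)) * sr"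
      unfolding g_star_def by (simp add: algebra_simps)
    also have "\<dots> \<le> (1 - (a * \<rho>1 + (1-a) * \<rho>2)^2) * sr"
      using h sr by (intro mult_right_mono) auto
    finally show ?thesis unfolding g_star_def .
  qed
  moreover have "a * Cap (g_star \<rho>1 sr) + (1-a) * Cap (g_star \<rho>2 sr) \<le> Cap (a * g_star \<rho>1 sr + (1-a) * g_star \<rho>2 sr)"
    using Cap_conc[OF g0 g0 a0 a1] p1 p2 by simp
  moreover have "0 \<le> a * g_star \<rho>1 sr + (1-a) * g_star \<rho>2 sr" using g0 p1 p2 a0 b0 by simp
  ultimately show "a * Cap (g_star \<rho>1 sr) + (1-a) * Cap (g_star \<rho>2 sr) \<le> Cap (g_star (a * \<rho>1 + (1-a) * \<rho>2) sr)"
    using Cap_mono by (meson order_trans)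
qed

lemma part2_j:
  fixes sr1 sr2 \<rho> a :: real
  assumes sr1: "0 \<le> sr1" and s1: "0 \<le> s1 j" and r1: "0 \<le> r1 j"
    and sr2: "0 \<le> sr2" and s2: "0 \<le> s2 j" and r2: "0 \<le> r2 j"
    and p: "0 \<le> \<rho>" "\<rho> \<le> 1" and a0: "0 \<le> a" and a1: "a \<le> 1"
  shows "a * min (Cap (f_j j \<rho> s1 r1)) (Cap (g_star \<rho> sr1)) + (1-a) * min (Cap (f_j j \<rho> s2 r2)) (Cap (g_star \<rho> sr2))
    \<le> min (Cap (f_j j \<rho> (\<lambda>j. a * s1 j + (1 - a) * s2 j) (\<lambda>j. a * r1 j + (1 - a) * r2 j)))
            (Cap (g_star \<rho> (a * sr1 + (1 - a) * sr2)))"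
proof (rule min_conc[OF a0 a1])
  have b0: "0 \<le> 1 - a" using a1 by simp
  have f1: "0 \<le> f_j j \<rho> s1 r1" unfolding f_j_def using s1 r1 p by simp
  have f2: "0 \<le> f_j j \<rho> s2 r2" unfolding f_j_def using s2 r2 p by simp
  have "a * sqrt (s1 j * r1 j) + (1-a) * sqrt (s2 j * r2 j) \<le> sqrt ((a * s1 j + (1-a) * s2 j) * (a * r1 j + (1-a) * r2 j))"
    by (rule sqrt_geo_conc) (use s1 r1 s2 r2 a0 a1 in auto)
  hence "2 * \<rho> * (a * sqrt (s1 j * r1 j) + (1-a) * sqrt (s2 j * r2 j)) \<le> 2 * \<rho> * sqrt ((a * s1 j + (1-a) * s2 j) * (a * r1 j + (1-a) * r2 j))"
    using p by (intro mult_left_mono) auto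
  hence le: "a * f_j j \<rho> s1 r1 + (1-a) * f_j j \<rho> s2 r2 \<le> f_j j \<rho> (\<lambda>j. a * s1 j + (1 - a) * s2 j) (\<lambda>j. a * r1 j + (1 - a) * r2 j)"
    unfolding f_j_def by (simp add: algebra_simps)
  have "a * Cap (f_j j \<rho> s1 r1) + (1-a) * Cap (f_j j \<rho> s2 r2) \<le> Cap (a * f_j j \<rho> s1 r1 + (1-a) * f_j j \<rho> s2 r2)"
    by (rule Cap_conc[OF f1 f2 a0 a1])
  also have "\<dots> \<le> Cap (f_j j \<rho> (\<lambda>j. a * s1 j + (1 - a) * s2 j) (\<lambda>j. a * r1 j + (1 - a) * r2 j))"
    by (rule Cap_mono[OF _ le]) (use f1 f2 a0 b0 in simp)
  finally show "a * Cap (f_j j \<rho> s1 r1) + (1-a) * Cap (f_j j \<rho> s2 r2) \<le> Cap (f_j j \<rho> (\<lambda>j. a * s1 j + (1 - a) * s2 j) (\<lambda>j. a * r1 j + (1 - a) * r2 j))" .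
  have g0: "0 \<le> g_star \<rho> sr" if "0 \<le> sr" for sr
  proof -
    have "\<rho>^2 \<le> 1" using p by (simp add: power_le_one)
    thus ?thesis unfolding g_star_def using that by simp
  qed
  have "g_star \<rho> (a * sr1 + (1 - a) * sr2) = a * g_star \<rho> sr1 + (1-a) * g_star \<rho> sr2"
    unfolding g_star_def by (simp add: algebra_simps)
  then show "a * Cap (g_star \<rho> sr1) + (1-a) * Cap (g_star \<rho> sr2) \<le> Cap (g_star \<rho> (a * sr1 + (1 - a) * sr2))"
    using Cap_conc[OF g0[OF sr1] g0[OF sr2] a0 a1] by simp
qed

lemma part3_j:
  fixes sr1 sr2 t1 t2 a :: real
  assumes sr1: "0 \<le> sr1" and s1: "0 \<le> s1 j" and r1: "0 \<le> r1 j"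
    and sr2: "0 \<le> sr2" and s2: "0 \<le> s2 j" and r2: "0 \<le> r2 j"
    and t1: "0 \<le> t1" "t1 \<le> 1" and t2: "0 \<le> t2" "t2 \<le> 1" and a0: "0 \<le> a" and a1: "a \<le> 1"
  shows "min (min (Cap (f_j j (sqrt t1) s1 r1)) (Cap (g_star (sqrt t1) sr1))) (min (Cap (f_j j (sqrt t2) s2 r2)) (Cap (g_star (sqrt t2) sr2)))
    \<le> min (Cap (f_j j (sqrt (a * t1 + (1 - a) * t2)) (\<lambda>j. a * s1 j + (1 - a) * s2 j) (\<lambda>j. a * r1 j + (1 - a) * r2 j)))
            (Cap (g_star (sqrt (a * t1 + (1 - a) * t2)) (a * sr1 + (1 - a) * sr2)))"
proof (rule min_quasi2)
  have b0: "0 \<le> 1 - a" using a1 by simp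
  have tm0: "0 \<le> a * t1 + (1 - a) * t2" using t1 t2 a0 b0 by simp
  have fh: "f_j j (sqrt t) s r = hh t (s j) (r j)" for t s r unfolding f_j_def hh_def by simp
  show "min (Cap (f_j j (sqrt t1) s1 r1)) (Cap (f_j j (sqrt t2) s2 r2))
      \<le> Cap (f_j j (sqrt (a * t1 + (1 - a) * t2)) (\<lambda>j. a * s1 j + (1 - a) * s2 j) (\<lambda>j. a * r1 j + (1 - a) * r2 j))"
    unfolding fh
    by (rule Cap_quasi[OF hh_nonneg hh_nonneg hh_quasi]) (use t1 t2 s1 s2 r1 r2 a0 a1 in auto)
  have gh: "g_star (sqrt t) sr = (1 - t) * sr" if "0 \<le> t" for t sr unfolding g_star_def using that by simp
  have e: "1 - (a * t1 + (1 - a) * t2) = a * (1 - t1) + (1-a) * (1 - t2)" by (simp add: algebra_simps)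
  show "min (Cap (g_star (sqrt t1) sr1)) (Cap (g_star (sqrt t2) sr2)) \<le> Cap (g_star (sqrt (a * t1 + (1 - a) * t2)) (a * sr1 + (1 - a) * sr2))"
    unfolding gh[OF t1(1)] gh[OF t2(1)] gh[OF tm0] e
    by (rule Cap_quasi[OF _ _ prod_quasi]) (use t1 t2 sr1 sr2 a0 a1 in auto)
qed

theorem theorem2:
  fixes N :: nat
  assumes "N \<ge> 1"
  shows
    "(\<forall>sr s r. S_dom N sr s r \<longrightarrow> concave_on {0..1} (\<lambda>\<rho>. R_DF N \<rho> sr s r))
   \<and> (\<forall>\<rho> \<in> {0..1}. \<forall>sr1 s1 r1 sr2 s2 r2 (a::real).
        S_dom N sr1 s1 r1 \<longrightarrow> S_dom N sr2 s2 r2 \<longrightarrow> 0 \<le> a \<longrightarrow> a \<le> 1 \<longrightarrow>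
        R_DF N \<rho> (a * sr1 + (1 - a) * sr2)
                  (\<lambda>j. a * s1 j + (1 - a) * s2 j) (\<lambda>j. a * r1 j + (1 - a) * r2 j)
        \<ge> a * R_DF N \<rho> sr1 s1 r1 + (1 - a) * R_DF N \<rho> sr2 s2 r2)
   \<and> (\<forall>t1 \<in> {0..1}. \<forall>t2 \<in> {0..1}. \<forall>sr1 s1 r1 sr2 s2 r2 (a::real).
        S_dom N sr1 s1 r1 \<longrightarrow> S_dom N sr2 s2 r2 \<longrightarrow> 0 \<le> a \<longrightarrow> a \<le> 1 \<longrightarrow>
        R_DF N (sqrt (a * t1 + (1 - a) * t2)) (a * sr1 + (1 - a) * sr2)
                  (\<lambda>j. a * s1 j + (1 - a) * s2 j) (\<lambda>j. a * r1 j + (1 - a) * r2 j)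
        \<ge> min (R_DF N (sqrt t1) sr1 s1 r1) (R_DF N (sqrt t2) sr2 s2 r2))"
proof (intro conjI)
  have fin: "finite {1..N}" and ne: "{1..N} \<noteq> {}" using assms by auto
  show "\<forall>sr s r. S_dom N sr s r \<longrightarrow> concave_on {0..1} (\<lambda>\<rho>. R_DF N \<rho> sr s r)"
  proof (intro allI impI)
    fix sr s r assume D: "S_dom N sr s r"
    show "concave_on {0..1} (\<lambda>\<rho>. R_DF N \<rho> sr s r)"
      unfolding concave_on_iff
    proof (intro conjI ballI allI impI)
      show "convex {0..1::real}" by simp
      fix x y :: real and u v :: real
      assume x: "x \<in> {0..1}" and y: "y \<in> {0..1}" and u: "0 \<le> u" and v: "0 \<le> v" and uv: "u + v = 1"
      have v1: "v = 1 - u" using uv by simp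
      show "u * R_DF N x sr s r + v * R_DF N y sr s r \<le> R_DF N (u *\<^sub>R x + v *\<^sub>R y) sr s r"
        unfolding R_DF_def v1 scaleR_conv_of_real of_real_def[symmetric] of_real_eq_id id_def
      proof (rule Min_conc[OF fin ne u])
        show "u \<le> 1" using uv v by simp
        fix j assume j: "j \<in> {1..N}"
        show "u * min (Cap (f_j j x s r)) (Cap (g_star x sr)) + (1 - u) * min (Cap (f_j j y s r)) (Cap (g_star y sr))
          \<le> min (Cap (f_j j (u * x + (1 - u) * y) s r)) (Cap (g_star (u * x + (1 - u) * y) sr))"
          by (rule part1_j) (use u uv v x y D j in \<open>auto simp: S_dom_def\<close>)
      qed
    qed
  qed
  show "\<forall>\<rho> \<in> {0..1}. \<forall>sr1 s1 r1 sr2 s2 r2 (a::real).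
        S_dom N sr1 s1 r1 \<longrightarrow> S_dom N sr2 s2 r2 \<longrightarrow> 0 \<le> a \<longrightarrow> a \<le> 1 \<longrightarrow>
        R_DF N \<rho> (a * sr1 + (1 - a) * sr2)
                  (\<lambda>j. a * s1 j + (1 - a) * s2 j) (\<lambda>j. a * r1 j + (1 - a) * r2 j)
        \<ge> a * R_DF N \<rho> sr1 s1 r1 + (1 - a) * R_DF N \<rho> sr2 s2 r2"
  proof (intro ballI allI impI)
    fix \<rho> sr1 sr2 a :: real and s1 r1 s2 r2 :: "nat \<Rightarrow> real"
    assume p: "\<rho> \<in> {0..1}" and D1: "S_dom N sr1 s1 r1" and D2: "S_dom N sr2 s2 r2" and a0: "0 \<le> a" and a1: "a \<le> 1"
    show "R_DF N \<rho> (a * sr1 + (1 - a) * sr2) (\<lambda>j. a * s1 j + (1 - a) * s2 j) (\<lambda>j. a * r1 j + (1 - a) * r2 j)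
        \<ge> a * R_DF N \<rho> sr1 s1 r1 + (1 - a) * R_DF N \<rho> sr2 s2 r2"
      unfolding R_DF_def
    proof (rule Min_conc[OF fin ne a0 a1])
      fix j assume j: "j \<in> {1..N}"
      show "a * min (Cap (f_j j \<rho> s1 r1)) (Cap (g_star \<rho> sr1)) + (1 - a) * min (Cap (f_j j \<rho> s2 r2)) (Cap (g_star \<rho> sr2))
        \<le> min (Cap (f_j j \<rho> (\<lambda>j. a * s1 j + (1 - a) * s2 j) (\<lambda>j. a * r1 j + (1 - a) * r2 j)))
            (Cap (g_star \<rho> (a * sr1 + (1 - a) * sr2)))"
        by (rule part2_j) (use p D1 D2 a0 a1 j in \<open>auto simp: S_dom_def\<close>)
    qed
  qed
  show "\<forall>t1 \<in> {0..1}. \<forall>t2 \<in> {0..1}. \<forall>sr1 s1 r1 sr2 s2 r2 (a::real).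
        S_dom N sr1 s1 r1 \<longrightarrow> S_dom N sr2 s2 r2 \<longrightarrow> 0 \<le> a \<longrightarrow> a \<le> 1 \<longrightarrow>
        R_DF N (sqrt (a * t1 + (1 - a) * t2)) (a * sr1 + (1 - a) * sr2)
                  (\<lambda>j. a * s1 j + (1 - a) * s2 j) (\<lambda>j. a * r1 j + (1 - a) * r2 j)
        \<ge> min (R_DF N (sqrt t1) sr1 s1 r1) (R_DF N (sqrt t2) sr2 s2 r2)"
  proof (intro ballI allI impI)
    fix t1 t2 sr1 sr2 a :: real and s1 r1 s2 r2 :: "nat \<Rightarrow> real"
    assume t1: "t1 \<in> {0..1}" and t2: "t2 \<in> {0..1}" and D1: "S_dom N sr1 s1 r1" and D2: "S_dom N sr2 s2 r2" and a0: "0 \<le> a" and a1: "a \<le> 1"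
    show "R_DF N (sqrt (a * t1 + (1 - a) * t2)) (a * sr1 + (1 - a) * sr2) (\<lambda>j. a * s1 j + (1 - a) * s2 j) (\<lambda>j. a * r1 j + (1 - a) * r2 j)
        \<ge> min (R_DF N (sqrt t1) sr1 s1 r1) (R_DF N (sqrt t2) sr2 s2 r2)"
      unfolding R_DF_def
    proof (rule Min_quasi[OF fin ne])
      fix j assume j: "j \<in> {1..N}"
      show "min (min (Cap (f_j j (sqrt t1) s1 r1)) (Cap (g_star (sqrt t1) sr1))) (min (Cap (f_j j (sqrt t2) s2 r2)) (Cap (g_star (sqrt t2) sr2)))
        \<le> min (Cap (f_j j (sqrt (a * t1 + (1 - a) * t2)) (\<lambda>j. a * s1 j + (1 - a) * s2 j) (\<lambda>j. a * r1 j + (1 - a) * r2 j)))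
            (Cap (g_star (sqrt (a * t1 + (1 - a) * t2)) (a * sr1 + (1 - a) * sr2)))"
        by (rule part3_j) (use t1 t2 D1 D2 a0 a1 j in \<open>auto simp: S_dom_def\<close>)
    qed
  qed
qed

end
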